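(* Let $n\ge2$, and let $\Gamma,\Gamma'\in\mathcal{K}_n$ with associated arrays $A,A'$ and associated directed graphs $G,G'$. Then $\Gamma\simeq\Gamma'$ (as groups) if and only if $A=A'$, which in turn holds if and only if $G$ and $G'$ are isomorphic as directed graphs.
   Context: Let $e_1,\dots,e_n$ be the canonical basis of $\mathbb{R}^n$. For $1\le i\le n-1$ let $C_i$ be the diagonal matrix with $-1$ in position $i$ and $1$ elsewhere, and $c_i=\tfrac12e_{i+1}+\sum_{j=1}^{i-1}c_{ji}e_j$ with $c_{ji}\in\{0,\tfrac12\}$. $\mathcal{K}_n$ is the set of subgroups of $I(\mathbb{R}^n)$ generated by $\{C_iL_{c_i}:1\le i\le n-1\}\cup\{L_{e_j}:1\le j\le n\}$, over all choices of the $c_{ji}$ (here $BL_b$ is $x\mapsto B(x+b)$). The array $A$ of such a group is the $n\times n$ array whose $i$-th column, for $1\le i\le n-1$, is the coordinate vector of $c_i$, and whose $n$-th column is the vector with entries in $\{0,\tfrac12\}$ congruent to $c_1+\dots+c_{n-1}$ modulo $\mathbb{Z}^n$. The associated directed graph has vertex set $\{v_1,\dots,v_n\}$ and an arrow from $v_i$ to $v_j$ (loops allowed) if and only if the $(i,j)$ entry of $A$ equals $\tfrac12$. *)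

theory Defs
  imports "HOL-Analysis.Analysis" "HOL-Algebra.Algebra"
begin

definition Rn :: "nat \<Rightarrow> (nat \<Rightarrow> real) set" where
  "Rn n = {x. \<forall>k. k \<notin> {1..n} \<longrightarrow> x k = 0}"

definition unitv :: "nat \<Rightarrow> nat \<Rightarrow> real" where
  "unitv j = (\<lambda>k. if k = j then 1 else 0)"

definition valid_params :: "nat \<Rightarrow> (nat \<Rightarrow> nat \<Rightarrow> real) \<Rightarrow> bool" where
  "valid_params n c \<longleftrightarrow> (\<forall>i j. 1 \<le> j \<and> j < i \<and> i \<le> n - 1 \<longrightarrow> c j i \<in> {0, 1/2})"

definition cvec :: "(nat \<Rightarrow> nat \<Rightarrow> real) \<Rightarrow> nat \<Rightarrow> nat \<Rightarrow> real" where
  "cvec c i = (\<lambda>k. (1/2) * unitv (i+1) k + (\<Sum>j\<in>{1..<i}. c j i * unitv j k))"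

definition Cmat :: "nat \<Rightarrow> (nat \<Rightarrow> real) \<Rightarrow> (nat \<Rightarrow> real)" where
  "Cmat i x = (\<lambda>k. (if k = i then -1 else 1) * x k)"

definition genC :: "nat \<Rightarrow> (nat \<Rightarrow> nat \<Rightarrow> real) \<Rightarrow> nat \<Rightarrow> ((nat \<Rightarrow> real) \<Rightarrow> (nat \<Rightarrow> real))" where
  "genC n c i = (\<lambda>x \<in> Rn n. Cmat i (\<lambda>k. x k + cvec c i k))"

definition transl :: "nat \<Rightarrow> nat \<Rightarrow> ((nat \<Rightarrow> real) \<Rightarrow> (nat \<Rightarrow> real))" where
  "transl n j = (\<lambda>x \<in> Rn n. (\<lambda>k. x k + unitv j k))"

definition Kgroup :: "nat \<Rightarrow> (nat \<Rightarrow> nat \<Rightarrow> real) \<Rightarrow> ((nat \<Rightarrow> real) \<Rightarrow> (nat \<Rightarrow> real)) monoid" where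
  "Kgroup n c = subgroup_generated (BijGroup (Rn n))
      ({genC n c i | i. 1 \<le> i \<and> i \<le> n - 1} \<union> {transl n j | j. 1 \<le> j \<and> j \<le> n})"

definition arr :: "nat \<Rightarrow> (nat \<Rightarrow> nat \<Rightarrow> real) \<Rightarrow> nat \<Rightarrow> nat \<Rightarrow> real" where
  "arr n c k i =
     (if k \<in> {1..n} \<and> i \<in> {1..n} then
        (if i \<le> n - 1 then cvec c i k
         else (THE y. y \<in> {0, 1/2} \<and> (\<Sum>l\<in>{1..n-1}. cvec c l k) - y \<in> \<int>))
      else 0)"

definition arcs :: "nat \<Rightarrow> (nat \<Rightarrow> nat \<Rightarrow> real) \<Rightarrow> (nat \<times> nat) set" where
  "arcs n c = {(i, j). i \<in> {1..n} \<and> j \<in> {1..n} \<and> arr n c i j = 1/2}"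

definition digraph_iso :: "'a set \<Rightarrow> ('a \<times> 'a) set \<Rightarrow> 'b set \<Rightarrow> ('b \<times> 'b) set \<Rightarrow> bool" where
  "digraph_iso V E V' E' \<longleftrightarrow>
     (\<exists>f. bij_betw f V V' \<and> (\<forall>u\<in>V. \<forall>v\<in>V. (u, v) \<in> E \<longleftrightarrow> (f u, f v) \<in> E'))"

end

theory Submission
  imports Defs
begin

lemma cvec_closed: "cvec c i k = (if k = i+1 then 1/2 else if 1 \<le> k \<and> k < i then c k i else 0)"
proof -
  have "(\<Sum>j\<in>{1..<i}. c j i * unitv j k) = (if k \<in> {1..<i} then c k i else 0)"
    unfolding unitv_def by (simp add: if_distrib cong: if_cong)
  then show ?thesis unfolding cvec_def unitv_def by auto
qed

lemma cvec_vals: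
  assumes "valid_params n c" "1 \<le> i" "i \<le> n - 1"
  shows "cvec c i k \<in> {0, 1/2}"
  using assms unfolding valid_params_def cvec_closed by auto

lemma half_not_int: "(1/2::real) \<notin> \<int>"
proof
  assume "(1/2::real) \<in> \<int>"
  then obtain r where "(1/2::real) = of_int r" using Ints_cases by blast
  then have "(1::real) = 2 * of_int r" by simp
  then have "(1::int) = 2 * r" by linarith
  then show False by presburger
qed

lemma THE_half:
  fixes x :: real
  assumes "2 * x \<in> \<int>"
  shows "(THE y. y \<in> {0, 1/2} \<and> x - y \<in> \<int>) = (if x \<in> \<int> then 0 else 1/2)"
proof (rule the_equality)
  obtain m where m: "2 * x = of_int m" using assms Ints_cases by blast
  show "(if x \<in> \<int> then 0 else 1/2) \<in> {0, 1/2} \<and> x - (if x \<in> \<int> then 0 else 1/2) \<in> \<int>"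
  proof (cases "x \<in> \<int>")
    case False
    have "odd m"
    proof
      assume "even m" then obtain r where "m = 2 * r" by blast
      then have "x = of_int r" using m by simp
      then show False using False by simp
    qed
    then obtain r where "m = 2 * r + 1" by (metis oddE)
    then have "x - 1/2 = of_int r" using m by simp
    then show ?thesis using False by simp
  qed simp
next
  fix y assume y: "y \<in> {0, 1/2} \<and> x - y \<in> \<int>"
  show "y = (if x \<in> \<int> then 0 else 1/2)"
  proof (cases "x \<in> \<int>")
    case True
    show ?thesis
    proof (rule ccontr)
      assume "y \<noteq> (if x \<in> \<int> then 0 else 1 / 2)"
      then have "y = 1/2" using y True by auto
      moreover have "x - (x - y) \<in> \<int>" using True y by (intro Ints_diff) auto
      moreover have "x - (x - y) = y" by simp
      ultimately have "y \<in> \<int>" "y = 1/2" by metis+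
      then show False using half_not_int by blast
    qed
  next
    case False
    then show ?thesis using y by auto
  qed
qed

lemma sum_half_int:
  assumes "valid_params n c"
  shows "2 * (\<Sum>l\<in>{1..n-1}. cvec c l k) \<in> \<int>"
proof -
  have "2 * (\<Sum>l\<in>{1..n-1}. cvec c l k) = (\<Sum>l\<in>{1..n-1}. 2 * cvec c l k)"
    by (simp add: sum_distrib_left)
  also have "\<dots> \<in> \<int>"
  proof (rule Ints_sum)
    fix l assume "l \<in> {1..n-1}"
    then have "cvec c l k = 0 \<or> cvec c l k = 1/2" using cvec_vals[OF assms] by auto
    then have "2 * cvec c l k = 0 \<or> 2 * cvec c l k = 1" by auto
    then show "2 * cvec c l k \<in> \<int>" by (metis Ints_0 Ints_1)
  qed
  finally show ?thesis .
qed

lemma arr_col: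
  assumes "k \<in> {1..n}" "i \<in> {1..n-1}"
  shows "arr n c k i = cvec c i k"
  using assms unfolding arr_def by auto

lemma arr_lastcol:
  assumes "valid_params n c" "k \<in> {1..n}" "n \<ge> 2"
  shows "arr n c k n = (if (\<Sum>l\<in>{1..n-1}. cvec c l k) \<in> \<int> then 0 else 1/2)"
proof -
  have "arr n c k n = (THE y. y \<in> {0, 1/2} \<and> (\<Sum>l\<in>{1..n-1}. cvec c l k) - y \<in> \<int>)"
    using assms unfolding arr_def by auto
  then show ?thesis using THE_half[OF sum_half_int[OF assms(1)]] by simp
qed

definition AGREE :: "nat \<Rightarrow> (nat \<Rightarrow> nat \<Rightarrow> real) \<Rightarrow> (nat \<Rightarrow> nat \<Rightarrow> real) \<Rightarrow> bool" where
  "AGREE n c c' \<longleftrightarrow> (\<forall>i\<in>{1..n-1}. \<forall>k\<in>{1..n}. cvec c i k = cvec c' i k)"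

lemma arr_eq_iff:
  assumes "n \<ge> 2"
  shows "arr n c = arr n c' \<longleftrightarrow> AGREE n c c'"
proof
  assume "arr n c = arr n c'"
  then show "AGREE n c c'" unfolding AGREE_def using arr_col by metis
next
  assume A: "AGREE n c c'"
  show "arr n c = arr n c'"
  proof (intro ext)
    fix k i
    have s: "k \<in> {1..n} \<Longrightarrow> (\<Sum>l\<in>{1..n-1}. cvec c l k) = (\<Sum>l\<in>{1..n-1}. cvec c' l k)"
      using A unfolding AGREE_def by (intro sum.cong) auto
    show "arr n c k i = arr n c' k i"
      unfolding arr_def using A s unfolding AGREE_def by auto
  qed
qed

lemma rigid:
  assumes bij: "bij_betw f {1..n} {1..n}" and fn: "f n = n" and n1: "n \<ge> 1"
    and rel: "\<forall>k\<in>{1..n}. \<forall>i\<in>{1..n-1}. (cvec c i k = 1/2 \<longleftrightarrow> cvec c' (f i) (f k) = 1/2)"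
  shows "\<forall>k\<in>{1..n}. f k = k"
proof -
  have inj: "inj_on f {1..n}" using bij by (simp add: bij_betw_def)
  have img: "f ` {1..n} = {1..n}" using bij by (simp add: bij_betw_def)
  have "\<forall>k. n - d \<le> k \<and> k \<in> {1..n} \<longrightarrow> f k = k" for d
  proof (induction d)
    case 0
    then show ?case using fn by auto
  next
    case (Suc d)
    show ?case
    proof (intro allI impI)
      fix k assume k: "n - Suc d \<le> k \<and> k \<in> {1..n}"
      show "f k = k"
      proof (cases "n - d \<le> k")
        case True then show ?thesis using Suc k by auto
      next
        case False
        then have kk: "k + 1 = n - d" "k < n" "1 \<le> k" using k by auto
        have fk1: "f (k+1) = k+1" using Suc kk by auto
        have "cvec c k (k+1) = 1/2" by (simp add: cvec_closed)
        moreover have "k+1 \<in> {1..n}" "k \<in> {1..n-1}" using kk by auto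
        ultimately have "cvec c' (f k) (f (k+1)) = 1/2" using rel by blast
        then have "cvec c' (f k) (k+1) = 1/2" using fk1 by simp
        then have "k + 1 = f k + 1 \<or> (k + 1 < f k)" unfolding cvec_closed by (auto split: if_splits)
        then show "f k = k"
        proof
          assume "k + 1 < f k"
          moreover have "f k \<in> {1..n}" using img k by auto
          ultimately have "f (f k) = f k" using Suc kk by auto
          then have "f k = k" using inj k \<open>f k \<in> {1..n}\<close> by (metis inj_on_def)
          then show ?thesis by simp
        qed simp
      qed
    qed
  qed
  then show ?thesis by (metis diff_self_eq_0 le0)
qed

lemma rel_to_agree:
  assumes "valid_params n c" "valid_params n c'" "n \<ge> 2"
    and bij: "bij_betw f {1..n} {1..n}" and fn: "f n = n"
    and rel: "\<forall>k\<in>{1..n}. \<forall>i\<in>{1..n-1}. (cvec c i k = 1/2 \<longleftrightarrow> cvec c' (f i) (f k) = 1/2)"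
  shows "AGREE n c c'"
proof -
  have id: "\<forall>k\<in>{1..n}. f k = k" using rigid[OF bij fn _ rel] assms(3) by auto
  show ?thesis unfolding AGREE_def
  proof (intro ballI)
    fix i k assume i: "i \<in> {1..n-1}" and k: "k \<in> {1..n}"
    have "i \<in> {1..n}" using i by auto
    then have "cvec c i k = 1/2 \<longleftrightarrow> cvec c' i k = 1/2" using rel i k id by metis
    moreover have "cvec c i k \<in> {0,1/2}" "cvec c' i k \<in> {0,1/2}"
      using cvec_vals assms(1,2) i by auto
    ultimately show "cvec c i k = cvec c' i k" by auto
  qed
qed

lemma sum_last: assumes "n \<ge> 2" shows "(\<Sum>l\<in>{1..n-1}. cvec c l n) = 1/2"
proof -
  have "(\<Sum>l\<in>{1..n-1}. cvec c l n) = (\<Sum>l\<in>{1..n-1}. if l = n - 1 then 1/2 else 0)"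
    using assms by (intro sum.cong) (auto simp: cvec_closed)
  also have "\<dots> = 1/2" using assms by (simp add: sum.delta)
  finally show ?thesis .
qed

lemma loop_char:
  assumes "valid_params n c" "n \<ge> 2" "u \<in> {1..n}"
  shows "(u,u) \<in> arcs n c \<longleftrightarrow> u = n"
proof (cases "u = n")
  case True
  have "arr n c n n = (if (\<Sum>l\<in>{1..n-1}. cvec c l n) \<in> \<int> then 0 else 1/2)"
    using arr_lastcol[OF assms(1) _ assms(2), of n] assms by auto
  then have "arr n c n n = 1/2" unfolding sum_last[OF assms(2), of c] using half_not_int by simp
  then show ?thesis using True assms unfolding arcs_def by auto
next
  case False
  then have "arr n c u u = cvec c u u" using assms by (intro arr_col) auto
  then show ?thesis using False unfolding arcs_def by (auto simp: cvec_closed)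
qed

lemma arcs_col:
  assumes "k \<in> {1..n}" "i \<in> {1..n-1}" "n \<ge> 2"
  shows "(k,i) \<in> arcs n c \<longleftrightarrow> cvec c i k = 1/2"
  using assms arr_col[OF assms(1,2)] unfolding arcs_def by auto

lemma digraph_part:
  assumes "valid_params n c" "valid_params n c'" "n \<ge> 2"
  shows "arr n c = arr n c' \<longleftrightarrow> digraph_iso {1..n} (arcs n c) {1..n} (arcs n c')"
proof
  assume "arr n c = arr n c'"
  then have "arcs n c = arcs n c'" unfolding arcs_def by simp
  then show "digraph_iso {1..n} (arcs n c) {1..n} (arcs n c')"
    unfolding digraph_iso_def
  proof (intro exI[of _ "\<lambda>x. x"] conjI)
    show "bij_betw (\<lambda>x. x) {1..n} {1..n}" by (simp add: bij_betw_def)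
  qed (simp add: \<open>arcs n c = arcs n c'\<close>)
next
  assume "digraph_iso {1..n} (arcs n c) {1..n} (arcs n c')"
  then obtain f where bij: "bij_betw f {1..n} {1..n}"
    and pres: "\<forall>u\<in>{1..n}. \<forall>v\<in>{1..n}. (u, v) \<in> arcs n c \<longleftrightarrow> (f u, f v) \<in> arcs n c'"
    unfolding digraph_iso_def by blast
  have n1: "n \<in> {1..n}" using assms by auto
  have fn1: "f n \<in> {1..n}" using bij n1 bij_betw_apply by metis
  have "(n,n) \<in> arcs n c" using loop_char[OF assms(1,3) n1] by simp
  then have "(f n, f n) \<in> arcs n c'" using pres n1 by blast
  then have fn: "f n = n" using loop_char[OF assms(2,3) fn1] by simp
  have fi: "f i \<in> {1..n-1}" if "i \<in> {1..n-1}" for i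
  proof -
    have "i \<in> {1..n}" "i \<noteq> n" using that assms by auto
    moreover have "inj_on f {1..n}" using bij by (simp add: bij_betw_def)
    ultimately have "f i \<noteq> f n" using n1 by (metis inj_on_contraD)
    moreover have "f i \<in> {1..n}" using bij \<open>i \<in> {1..n}\<close> bij_betw_apply by metis
    ultimately show ?thesis using fn by auto
  qed
  have rel: "\<forall>k\<in>{1..n}. \<forall>i\<in>{1..n-1}. (cvec c i k = 1/2 \<longleftrightarrow> cvec c' (f i) (f k) = 1/2)"
  proof (intro ballI)
    fix k i assume k: "k \<in> {1..n}" and i: "i \<in> {1..n-1}"
    have fk: "f k \<in> {1..n}" using bij k bij_betw_apply by metis
    have "i \<in> {1..n}" using i by auto
    then have "(k,i) \<in> arcs n c \<longleftrightarrow> (f k, f i) \<in> arcs n c'" using pres k by blast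
    then show "cvec c i k = 1/2 \<longleftrightarrow> cvec c' (f i) (f k) = 1/2"
      using arcs_col[OF k i assms(3)] arcs_col[OF fk fi[OF i] assms(3)] by simp
  qed
  show "arr n c = arr n c'"
    using rel_to_agree[OF assms bij fn rel] arr_eq_iff[OF assms(3)] by simp
qed


definition sg :: "nat set \<Rightarrow> nat \<Rightarrow> real" where
  "sg S k = (if k \<in> S then -1 else 1)"

definition sd :: "nat set \<Rightarrow> nat set \<Rightarrow> nat set" where
  "sd S S' = (S - S') \<union> (S' - S)"

definition aff :: "nat \<Rightarrow> nat set \<Rightarrow> (nat \<Rightarrow> real) \<Rightarrow> ((nat \<Rightarrow> real) \<Rightarrow> (nat \<Rightarrow> real))" where
  "aff n S v = (\<lambda>x\<in>Rn n. (\<lambda>k. if k \<in> {1..n} then sg S k * x k + v k else 0))"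

lemma sg_sq[simp]: "sg S k * sg S k = 1" by (simp add: sg_def)
lemma sg_empty[simp]: "sg {} k = 1" by (simp add: sg_def)
lemma sd_simps[simp]: "sd S S = {}" "sd {} S = S" "sd S {} = S" by (auto simp: sd_def)
lemma sg_sd: "sg (sd S S') k = sg S k * sg S' k" by (auto simp: sg_def sd_def)

lemma aff_app: "x \<in> Rn n \<Longrightarrow> aff n S v x = (\<lambda>k. if k \<in> {1..n} then sg S k * x k + v k else 0)"
  unfolding aff_def by simp

lemma aff_maps: "x \<in> Rn n \<Longrightarrow> aff n S v x \<in> Rn n"
  unfolding aff_def Rn_def by auto

lemma aff_aff: "x \<in> Rn n \<Longrightarrow>
   aff n S w (aff n S' v x) = (\<lambda>k. if k \<in> {1..n} then sg S k * (sg S' k * x k + v k) + w k else 0)"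
  using aff_app[of "aff n S' v x" n S w] aff_app[of x n S' v] aff_maps[of x n S' v] by auto

lemma aff_comp:
  "compose (Rn n) (aff n S v) (aff n S' v') = aff n (sd S S') (\<lambda>k. sg S k * v' k + v k)"
proof (rule ext)
  fix x show "compose (Rn n) (aff n S v) (aff n S' v') x = aff n (sd S S') (\<lambda>k. sg S k * v' k + v k) x"
  proof (cases "x \<in> Rn n")
    case True
    have "compose (Rn n) (aff n S v) (aff n S' v') x = aff n S v (aff n S' v' x)"
      using True by (simp add: compose_def)
    also have "\<dots> = (\<lambda>k. if k \<in> {1..n} then sg S k * (sg S' k * x k + v' k) + v k else 0)"
      by (rule aff_aff[OF True])
    also have "\<dots> = aff n (sd S S') (\<lambda>k. sg S k * v' k + v k) x"
      unfolding aff_app[OF True] by (auto simp: sg_sd algebra_simps)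
    finally show ?thesis .
  next
    case False then show ?thesis by (simp add: compose_def aff_def)
  qed
qed

lemma aff_Bij: "aff n S v \<in> Bij (Rn n)"
proof -
  let ?w = "\<lambda>k. - sg S k * v k"
  have inv1: "aff n S ?w (aff n S v x) = x" if "x \<in> Rn n" for x
    unfolding aff_aff[OF that] using that unfolding Rn_def by (auto simp: algebra_simps)
  have inv2: "aff n S v (aff n S ?w x) = x" if "x \<in> Rn n" for x
    unfolding aff_aff[OF that] using that unfolding Rn_def by (auto simp: algebra_simps)
  have "bij_betw (aff n S v) (Rn n) (Rn n)"
    apply (rule bij_betw_byWitness[where f' = "aff n S ?w"])
    using inv1 inv2 aff_maps by auto
  moreover have "aff n S v \<in> extensional (Rn n)" unfolding aff_def by simp
  ultimately show ?thesis unfolding Bij_def by simp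
qed

lemma aff_eq:
  "aff n S v = aff n S' v' \<longleftrightarrow> (\<forall>k\<in>{1..n}. (k \<in> S \<longleftrightarrow> k \<in> S') \<and> v k = v' k)"
proof
  assume eq: "aff n S v = aff n S' v'"
  have z: "(\<lambda>k. 0::real) \<in> Rn n" unfolding Rn_def by simp
  have "aff n S v (\<lambda>k. 0) = aff n S' v' (\<lambda>k. 0)" using eq by simp
  then have "(\<lambda>k. if k \<in> {1..n} then sg S k * 0 + v k else 0) = (\<lambda>k. if k \<in> {1..n} then sg S' k * 0 + v' k else 0)"
    unfolding aff_app[OF z] .
  then have vv: "v k = v' k" if "k \<in> {1..n}" for k using that by (metis (no_types, lifting) add_0 mult_zero_right)
  have "k \<in> S \<longleftrightarrow> k \<in> S'" if k: "k \<in> {1..n}" for k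
  proof -
    have u: "unitv k \<in> Rn n" using k unfolding Rn_def unitv_def by auto
    have "aff n S v (unitv k) k = aff n S' v' (unitv k) k" using eq by simp
    then have "sg S k = sg S' k" using u vv k by (simp add: aff_app unitv_def)
    then show ?thesis by (auto simp: sg_def split: if_splits)
  qed
  then show "\<forall>k\<in>{1..n}. (k \<in> S \<longleftrightarrow> k \<in> S') \<and> v k = v' k" using vv by simp
next
  assume h: "\<forall>k\<in>{1..n}. (k \<in> S \<longleftrightarrow> k \<in> S') \<and> v k = v' k"
  then have "sg S k = sg S' k" if "k \<in> {1..n}" for k using that by (simp add: sg_def)
  then show "aff n S v = aff n S' v'" using h unfolding aff_def by (intro ext) auto
qed

abbreviation BG :: "nat \<Rightarrow> ((nat \<Rightarrow> real) \<Rightarrow> (nat \<Rightarrow> real)) monoid" where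
  "BG n \<equiv> BijGroup (Rn n)"

lemma mulB_aff:
  shows "aff n S v \<otimes>\<^bsub>BG n\<^esub> aff n S' v' = aff n (sd S S') (\<lambda>k. sg S k * v' k + v k)"
  using aff_Bij[of n S v] aff_Bij[of n S' v'] by (simp add: BijGroup_def aff_comp)

lemma oneB: "\<one>\<^bsub>BG n\<^esub> = aff n {} (\<lambda>k. 0)"
  unfolding BijGroup_def aff_def Rn_def by (auto intro!: ext)

lemma invB_aff:
  shows "inv\<^bsub>BG n\<^esub> (aff n S v) = aff n S (\<lambda>k. - sg S k * v k)"
proof (rule group.inv_equality[OF group_BijGroup])
  show "aff n S (\<lambda>k. - sg S k * v k) \<otimes>\<^bsub>BG n\<^esub> aff n S v = \<one>\<^bsub>BG n\<^esub>"
    by (simp add: mulB_aff oneB algebra_simps)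
  show "aff n S v \<in> carrier (BG n)" using aff_Bij by (simp add: BijGroup_def)
  show "aff n S (\<lambda>k. - sg S k * v k) \<in> carrier (BG n)" using aff_Bij by (simp add: BijGroup_def)
qed


definition sig :: "(nat \<Rightarrow> nat \<Rightarrow> real) \<Rightarrow> nat set \<Rightarrow> nat \<Rightarrow> real" where
  "sig c S k = (\<Sum>i\<in>S. cvec c i k)"

definition inM :: "nat \<Rightarrow> (nat \<Rightarrow> nat \<Rightarrow> real) \<Rightarrow> nat set \<Rightarrow> (nat \<Rightarrow> real) \<Rightarrow> bool" where
  "inM n c S v \<longleftrightarrow> S \<subseteq> {1..n-1} \<and> (\<forall>k\<in>{1..n}. v k - sig c S k \<in> \<int>)"

lemma two_cvec_int:
  assumes "valid_params n c" "i \<in> {1..n-1}"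
  shows "2 * cvec c i k \<in> \<int>"
proof -
  have "cvec c i k = 0 \<or> cvec c i k = 1/2" using cvec_vals[OF assms(1)] assms(2) by auto
  then have "2 * cvec c i k = 0 \<or> 2 * cvec c i k = 1" by auto
  then show ?thesis by (metis Ints_0 Ints_1)
qed

lemma two_sig_int:
  assumes "valid_params n c" "S \<subseteq> {1..n-1}"
  shows "2 * sig c S k \<in> \<int>"
proof -
  have "2 * sig c S k = (\<Sum>i\<in>S. 2 * cvec c i k)" unfolding sig_def by (simp add: sum_distrib_left)
  also have "\<dots> \<in> \<int>" using two_cvec_int[OF assms(1)] assms(2) by (intro Ints_sum) auto
  finally show ?thesis .
qed

lemma sig_sd:
  assumes "finite S" "finite S'"
  shows "sig c S k + sig c S' k = sig c (sd S S') k + 2 * sig c (S \<inter> S') k"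
proof -
  let ?f = "\<lambda>i. cvec c i k"
  have 1: "sum ?f S = sum ?f (S \<inter> S') + sum ?f (S - S')" by (rule sum.Int_Diff[OF assms(1)])
  have 2: "sum ?f S' = sum ?f (S \<inter> S') + sum ?f (S' - S)"
    using sum.Int_Diff[OF assms(2), of ?f S] by (simp add: Int_commute)
  have 3: "sum ?f (sd S S') = sum ?f (S - S') + sum ?f (S' - S)"
    unfolding sd_def using assms by (intro sum.union_disjoint) auto
  show ?thesis unfolding sig_def using 1 2 3 by simp
qed

lemma inM_mul:
  assumes vp: "valid_params n c" and A: "inM n c S v" and B: "inM n c S' v'"
  shows "inM n c (sd S S') (\<lambda>k. sg S k * v' k + v k)"
proof -
  have S: "S \<subseteq> {1..n-1}" "S' \<subseteq> {1..n-1}" using A B unfolding inM_def by auto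
  then have fin: "finite S" "finite S'" using finite_subset by auto
  have "sd S S' \<subseteq> {1..n-1}" using S unfolding sd_def by auto
  moreover have "sg S k * v' k + v k - sig c (sd S S') k \<in> \<int>" if k: "k \<in> {1..n}" for k
  proof -
    have a: "v k - sig c S k \<in> \<int>" "v' k - sig c S' k \<in> \<int>" using A B k unfolding inM_def by auto
    have "S \<inter> S' \<subseteq> {1..n-1}" using S by auto
    then have b: "2 * sig c S' k \<in> \<int>" "2 * sig c (S \<inter> S') k \<in> \<int>" using two_sig_int[OF vp] S by auto
    have c: "sg S k * v' k - v' k \<in> \<int>"
    proof (cases "k \<in> S")
      case True
      have "sg S k * v' k - v' k = - (2 * (v' k - sig c S' k)) - 2 * sig c S' k"
        using True by (simp add: sg_def algebra_simps)
      then show ?thesis using a b by (metis Ints_diff Ints_minus Ints_mult Ints_numeral)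
    qed (simp add: sg_def)
    have "sg S k * v' k + v k - sig c (sd S S') k
        = (sg S k * v' k - v' k) + (v' k - sig c S' k) + (v k - sig c S k) + 2 * sig c (S \<inter> S') k"
      using sig_sd[OF fin, of c k] by (simp add: algebra_simps)
    then show ?thesis using a b c by (metis Ints_add)
  qed
  ultimately show ?thesis unfolding inM_def by auto
qed

lemma inM_inv:
  assumes vp: "valid_params n c" and A: "inM n c S v"
  shows "inM n c S (\<lambda>k. - sg S k * v k)"
proof -
  have S: "S \<subseteq> {1..n-1}" using A unfolding inM_def by auto
  have "- sg S k * v k - sig c S k \<in> \<int>" if k: "k \<in> {1..n}" for k
  proof -
    have a: "v k - sig c S k \<in> \<int>" using A k unfolding inM_def by auto
    have b: "2 * sig c S k \<in> \<int>" using two_sig_int[OF vp S] by auto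
    show ?thesis
    proof (cases "k \<in> S")
      case True then show ?thesis using a by (simp add: sg_def)
    next
      case False
      have "- sg S k * v k - sig c S k = - (v k - sig c S k) - 2 * sig c S k"
        using False by (simp add: sg_def algebra_simps)
      then show ?thesis using a b by (metis Ints_diff Ints_minus)
    qed
  qed
  then show ?thesis using S unfolding inM_def by auto
qed


locale KG =
  fixes n :: nat and c :: "nat \<Rightarrow> nat \<Rightarrow> real"
  assumes n2: "n \<ge> 2" and vp: "valid_params n c"
begin

definition gens where
  "gens = {genC n c i | i. 1 \<le> i \<and> i \<le> n - 1} \<union> {transl n j | j. 1 \<le> j \<and> j \<le> n}"

lemma carrier_G: "carrier (Kgroup n c) = generate (BG n) (carrier (BG n) \<inter> gens)"
  unfolding Kgroup_def gens_def carrier_subgroup_generated by simp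

lemma mult_G: "mult (Kgroup n c) = mult (BG n)"
  unfolding Kgroup_def by simp

lemma one_G: "one (Kgroup n c) = aff n {} (\<lambda>k. 0)"
  unfolding Kgroup_def by (simp add: oneB)

lemma grpG: "group (Kgroup n c)"
  unfolding Kgroup_def by (rule group.group_subgroup_generated[OF group_BijGroup])

lemma cvec_Rn: "cvec c i \<in> Rn n" if "i \<in> {1..n-1}"
  using that unfolding Rn_def by (auto simp: cvec_closed)

lemma unitv_Rn: "unitv j \<in> Rn n" if "j \<in> {1..n}"
  using that unfolding Rn_def unitv_def by auto

lemma cvec_diag[simp]: "cvec c i i = 0" by (simp add: cvec_closed)

lemma genC_aff: "genC n c i = aff n {i} (cvec c i)" if i: "i \<in> {1..n-1}"
proof (rule ext)
  fix x show "genC n c i x = aff n {i} (cvec c i) x"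
  proof (cases "x \<in> Rn n")
    case True
    have "cvec c i k = 0" if "k \<notin> {1..n}" for k using cvec_Rn[OF i] that unfolding Rn_def by auto
    moreover have "x k = 0" if "k \<notin> {1..n}" for k using True that unfolding Rn_def by auto
    ultimately show ?thesis using True
      unfolding genC_def aff_def Cmat_def sg_def by (auto intro!: ext simp: algebra_simps)
  next
    case False then show ?thesis unfolding genC_def aff_def by simp
  qed
qed

lemma transl_aff: "transl n j = aff n {} (unitv j)" if j: "j \<in> {1..n}"
proof (rule ext)
  fix x show "transl n j x = aff n {} (unitv j) x"
  proof (cases "x \<in> Rn n")
    case True
    then show ?thesis using j unfolding transl_def aff_def Rn_def unitv_def by (auto intro!: ext)
  next
    case False then show ?thesis unfolding transl_def aff_def by simp
  qed
qed

lemma inM_genC: "inM n c {i} (cvec c i)" if "i \<in> {1..n-1}"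
  using that unfolding inM_def sig_def by auto

lemma inM_transl: "inM n c {} (unitv j)" if "j \<in> {1..n}"
  using that unfolding inM_def sig_def unitv_def by auto

lemma mulG:
  "aff n S v \<otimes>\<^bsub>Kgroup n c\<^esub> aff n S' v' = aff n (sd S S') (\<lambda>k. sg S k * v' k + v k)"
  using mulB_aff by (simp add: mult_G)

lemma gens_form:
  assumes "h \<in> carrier (BG n) \<inter> gens"
  shows "\<exists>S v. h = aff n S v \<and> inM n c S v"
proof -
  have "(\<exists>i. h = genC n c i \<and> i \<in> {1..n-1}) \<or> (\<exists>j. h = transl n j \<and> j \<in> {1..n})"
    using assms unfolding gens_def by auto
  then show ?thesis
  proof
    assume "\<exists>i. h = genC n c i \<and> i \<in> {1..n-1}"
    then obtain i where "h = genC n c i" "i \<in> {1..n-1}" by blast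
    then show ?thesis using genC_aff inM_genC by blast
  next
    assume "\<exists>j. h = transl n j \<and> j \<in> {1..n}"
    then obtain j where "h = transl n j" "j \<in> {1..n}" by blast
    then show ?thesis using transl_aff inM_transl by blast
  qed
qed

lemma carrier_form:
  assumes "g \<in> carrier (Kgroup n c)"
  shows "\<exists>S v. g = aff n S v \<and> inM n c S v"
proof -
  have "g \<in> generate (BG n) (carrier (BG n) \<inter> gens)" using assms carrier_G by simp
  then show ?thesis
  proof (induction rule: generate.induct)
    case one
    have "inM n c {} (\<lambda>k. 0)" unfolding inM_def sig_def by auto
    then show ?case using oneB by metis
  next
    case (incl h)
    then show ?case using gens_form by blast
  next
    case (inv h)
    then obtain S v where h: "h = aff n S v" "inM n c S v" using gens_form by blast
    then have "inv\<^bsub>BG n\<^esub> h = aff n S (\<lambda>k. - sg S k * v k)"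
      using invB_aff by auto
    then show ?case using inM_inv[OF vp h(2)] by metis
  next
    case (eng h1 h2)
    then obtain S v S' v' where h: "h1 = aff n S v" "inM n c S v" "h2 = aff n S' v'" "inM n c S' v'"
      by metis
    then have "h1 \<otimes>\<^bsub>BG n\<^esub> h2 = aff n (sd S S') (\<lambda>k. sg S k * v' k + v k)"
      using mulB_aff by auto
    then show ?case using inM_mul[OF vp h(2) h(4)] by metis
  qed
qed

lemma carrier_aff:
  assumes "aff n S v \<in> carrier (Kgroup n c)" "S \<subseteq> {1..n}"
  shows "inM n c S v"
proof -
  obtain S0 v0 where e: "aff n S v = aff n S0 v0" and m: "inM n c S0 v0" using carrier_form[OF assms(1)] by metis
  have S0: "S0 \<subseteq> {1..n}" using m unfolding inM_def by (auto simp: subset_iff)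
  have h: "\<forall>k\<in>{1..n}. (k \<in> S \<longleftrightarrow> k \<in> S0) \<and> v k = v0 k" using e aff_eq by metis
  then have "S = S0" using S0 assms(2) by blast
  then show ?thesis using m h unfolding inM_def by auto
qed

lemma invG:
  assumes "aff n S v \<in> carrier (Kgroup n c)"
  shows "inv\<^bsub>Kgroup n c\<^esub> (aff n S v) = aff n S (\<lambda>k. - sg S k * v k)"
proof -
  have "inv\<^bsub>Kgroup n c\<^esub> (aff n S v) = inv\<^bsub>BG n\<^esub> (aff n S v)"
    using assms(1) group.inv_subgroup_generated[OF group_BijGroup] unfolding Kgroup_def by blast
  then show ?thesis using invB_aff by simp
qed

lemma gen_in: "h \<in> gens \<Longrightarrow> h \<in> carrier (Kgroup n c)"
proof -
  assume h: "h \<in> gens"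
  then have "h \<in> carrier (BG n)" unfolding gens_def using genC_aff transl_aff aff_Bij
    by (auto simp: BijGroup_def)
  then show ?thesis using h carrier_G generate.incl by (metis IntI)
qed

lemma genC_in: "aff n {i} (cvec c i) \<in> carrier (Kgroup n c)" if "i \<in> {1..n-1}"
proof -
  have "genC n c i \<in> gens" using that unfolding gens_def by auto
  then show ?thesis using gen_in genC_aff[OF that] by metis
qed

lemma transl_in: "aff n {} (unitv j) \<in> carrier (Kgroup n c)" if "j \<in> {1..n}"
proof -
  have "transl n j \<in> gens" using that unfolding gens_def by auto
  then show ?thesis using gen_in transl_aff[OF that] by metis
qed

lemma mult_in_nat: "aff n {} (\<lambda>k. of_nat m * unitv j k) \<in> carrier (Kgroup n c)" if j: "j \<in> {1..n}"
proof (induction m)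
  case 0
  then show ?case using monoid.one_closed[OF group.is_monoid[OF grpG]] one_G by simp
next
  case (Suc m)
  have "aff n {} (unitv j) \<otimes>\<^bsub>Kgroup n c\<^esub> aff n {} (\<lambda>k. of_nat m * unitv j k)
      = aff n {} (\<lambda>k. of_nat (Suc m) * unitv j k)"
    using mulG by (simp add: algebra_simps)
  then show ?case using monoid.m_closed[OF group.is_monoid[OF grpG] transl_in[OF j] Suc.IH] by simp
qed

lemma mult_in: "aff n {} (\<lambda>k. of_int z * unitv j k) \<in> carrier (Kgroup n c)" if j: "j \<in> {1..n}"
proof (cases "z \<ge> 0")
  case True
  define m where "m = nat z"
  have "z = int m" using True unfolding m_def by simp
  then show ?thesis using mult_in_nat[OF j, of m] by simp
next
  case False
  define m where "m = nat (- z)"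
  have m: "z = - int m" using False unfolding m_def by simp
  have "inv\<^bsub>Kgroup n c\<^esub> aff n {} (\<lambda>k. of_nat m * unitv j k) = aff n {} (\<lambda>k. of_int z * unitv j k)"
    using invG[OF mult_in_nat[OF j]] m by simp
  then show ?thesis using group.inv_closed[OF grpG mult_in_nat[OF j]] by metis
qed

lemma class_exists:
  assumes "S \<subseteq> {1..n-1}"
  shows "\<exists>v. aff n S v \<in> carrier (Kgroup n c)"
proof -
  have "finite S" using assms finite_subset by blast
  then show ?thesis using assms
  proof (induction S rule: finite_induct)
    case empty
    show ?case using monoid.one_closed[OF group.is_monoid[OF grpG]] one_G by metis
  next
    case (insert i F)
    then obtain v where v: "aff n F v \<in> carrier (Kgroup n c)" by auto
    have i: "i \<in> {1..n-1}" using insert by auto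
    have "aff n {i} (cvec c i) \<otimes>\<^bsub>Kgroup n c\<^esub> aff n F v = aff n (sd {i} F) (\<lambda>k. sg {i} k * v k + cvec c i k)"
      using mulG by simp
    moreover have "sd {i} F = insert i F" using insert unfolding sd_def by auto
    ultimately show ?case using monoid.m_closed[OF group.is_monoid[OF grpG] genC_in[OF i] v(1)] by metis
  qed
qed

end


definition isT :: "('a, 'b) monoid_scheme \<Rightarrow> 'a \<Rightarrow> bool" where
  "isT G g \<longleftrightarrow> g \<in> carrier G \<and> (\<forall>h\<in>carrier G.
     g \<otimes>\<^bsub>G\<^esub> (h \<otimes>\<^bsub>G\<^esub> g \<otimes>\<^bsub>G\<^esub> inv\<^bsub>G\<^esub> h) = (h \<otimes>\<^bsub>G\<^esub> g \<otimes>\<^bsub>G\<^esub> inv\<^bsub>G\<^esub> h) \<otimes>\<^bsub>G\<^esub> g)"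

definition invs :: "('a, 'b) monoid_scheme \<Rightarrow> 'a \<Rightarrow> 'a \<Rightarrow> bool" where
  "invs G g t \<longleftrightarrow> t \<otimes>\<^bsub>G\<^esub> g \<otimes>\<^bsub>G\<^esub> t = g"

definition atom :: "('a, 'b) monoid_scheme \<Rightarrow> 'a \<Rightarrow> bool" where
  "atom G g \<longleftrightarrow> g \<in> carrier G \<and> \<not> isT G g \<and>
     (\<forall>d\<in>carrier G. \<not> isT G d \<and> (\<forall>t\<in>carrier G. isT G t \<and> invs G d t \<longrightarrow> invs G g t)
        \<longrightarrow> (\<forall>t\<in>carrier G. isT G t \<and> invs G g t \<longrightarrow> invs G d t))"

definition evenAt :: "('a, 'b) monoid_scheme \<Rightarrow> 'a \<Rightarrow> 'a \<Rightarrow> bool" where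
  "evenAt G w d \<longleftrightarrow> (\<exists>t\<in>carrier G. isT G t \<and>
     (w \<otimes>\<^bsub>G\<^esub> t \<otimes>\<^bsub>G\<^esub> t) \<otimes>\<^bsub>G\<^esub> d = d \<otimes>\<^bsub>G\<^esub> (w \<otimes>\<^bsub>G\<^esub> t \<otimes>\<^bsub>G\<^esub> t))"

definition evenN :: "('a, 'b) monoid_scheme \<Rightarrow> 'a \<Rightarrow> bool" where
  "evenN G w \<longleftrightarrow> (\<exists>t\<in>carrier G. isT G t \<and> (\<exists>e\<in>carrier G. invs G e (w \<otimes>\<^bsub>G\<^esub> t \<otimes>\<^bsub>G\<^esub> t)))"

locale isoGH =
  fixes G :: "('a, 'b) monoid_scheme" and H :: "('c, 'd) monoid_scheme" and f :: "'a \<Rightarrow> 'c"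
  assumes gG: "group G" and gH: "group H" and iso: "f \<in> iso G H"
begin

lemma hom: "f \<in> hom G H" using iso by (simp add: iso_def)
lemma bij: "bij_betw f (carrier G) (carrier H)" using iso by (simp add: iso_def)
lemma ghom: "group_hom G H f" using gG gH hom by (simp add: group_hom_def group_hom_axioms_def)

lemma f_car[simp]: "x \<in> carrier G \<Longrightarrow> f x \<in> carrier H"
  using hom by (simp add: hom_def Pi_def)
lemma mclos[simp]: "x \<in> carrier G \<Longrightarrow> y \<in> carrier G \<Longrightarrow> x \<otimes>\<^bsub>G\<^esub> y \<in> carrier G"
  using gG by (simp add: group.is_monoid monoid.m_closed)
lemma iclos[simp]: "x \<in> carrier G \<Longrightarrow> inv\<^bsub>G\<^esub> x \<in> carrier G"
  using gG by (simp add: group.inv_closed)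
lemma fold_mult[simp]: "x \<in> carrier G \<Longrightarrow> y \<in> carrier G \<Longrightarrow> f x \<otimes>\<^bsub>H\<^esub> f y = f (x \<otimes>\<^bsub>G\<^esub> y)"
  using hom by (simp add: hom_mult)
lemma fold_inv[simp]: "x \<in> carrier G \<Longrightarrow> inv\<^bsub>H\<^esub> (f x) = f (inv\<^bsub>G\<^esub> x)"
  using group_hom.hom_inv[OF ghom] by simp
lemma f_eq[simp]: "x \<in> carrier G \<Longrightarrow> y \<in> carrier G \<Longrightarrow> f x = f y \<longleftrightarrow> x = y"
  using bij by (auto simp: bij_betw_def inj_on_def)
lemma imgH: "carrier H = f ` carrier G" using bij by (simp add: bij_betw_def)
lemma ball_H: "(\<forall>h\<in>carrier H. P h) \<longleftrightarrow> (\<forall>h\<in>carrier G. P (f h))"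
  unfolding imgH by blast
lemma bex_H: "(\<exists>h\<in>carrier H. P h) \<longleftrightarrow> (\<exists>h\<in>carrier G. P (f h))"
  unfolding imgH by blast

lemma isT_tr: "x \<in> carrier G \<Longrightarrow> isT H (f x) \<longleftrightarrow> isT G x"
  unfolding isT_def ball_H by simp

lemma invs_tr: "x \<in> carrier G \<Longrightarrow> t \<in> carrier G \<Longrightarrow> invs H (f x) (f t) \<longleftrightarrow> invs G x t"
  unfolding invs_def by simp

lemma atom_tr: "x \<in> carrier G \<Longrightarrow> atom H (f x) \<longleftrightarrow> atom G x"
  unfolding atom_def ball_H by (simp add: isT_tr invs_tr)

lemma evenAt_tr: "w \<in> carrier G \<Longrightarrow> d \<in> carrier G \<Longrightarrow> evenAt H (f w) (f d) \<longleftrightarrow> evenAt G w d"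
  unfolding evenAt_def bex_H by (simp add: isT_tr)

lemma evenN_tr: "w \<in> carrier G \<Longrightarrow> evenN H (f w) \<longleftrightarrow> evenN G w"
  unfolding evenN_def bex_H by (simp add: isT_tr invs_tr)

end


context KG
begin

abbreviation K where "K \<equiv> Kgroup n c"

lemma Kmono: "monoid K" using grpG group.is_monoid by blast

lemma isT_iff:
  assumes g: "aff n S v \<in> carrier K" and S: "S \<subseteq> {1..n}"
  shows "isT K (aff n S v) \<longleftrightarrow> S = {}"
proof
  assume T: "isT K (aff n S v)"
  show "S = {}"
  proof (rule ccontr)
    assume "S \<noteq> {}"
    then obtain k where k: "k \<in> S" by blast
    then have kn: "k \<in> {1..n}" using S by auto
    let ?h = "aff n {} (unitv k)"
    have h: "?h \<in> carrier K" using transl_in[OF kn] .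
    have ih: "inv\<^bsub>K\<^esub> ?h = aff n {} (\<lambda>j. - unitv k j)" using invG[OF h] by simp
    let ?w = "\<lambda>j. sg S j * (- unitv k j) + (v j + unitv k j)"
    have conj: "?h \<otimes>\<^bsub>K\<^esub> aff n S v \<otimes>\<^bsub>K\<^esub> inv\<^bsub>K\<^esub> ?h = aff n S ?w"
      unfolding ih by (simp add: mulG)
    have "aff n S v \<otimes>\<^bsub>K\<^esub> (?h \<otimes>\<^bsub>K\<^esub> aff n S v \<otimes>\<^bsub>K\<^esub> inv\<^bsub>K\<^esub> ?h)
        = (?h \<otimes>\<^bsub>K\<^esub> aff n S v \<otimes>\<^bsub>K\<^esub> inv\<^bsub>K\<^esub> ?h) \<otimes>\<^bsub>K\<^esub> aff n S v"
      using T h unfolding isT_def by blast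
    then have "aff n S v \<otimes>\<^bsub>K\<^esub> aff n S ?w = aff n S ?w \<otimes>\<^bsub>K\<^esub> aff n S v"
      unfolding conj .
    then have "aff n {} (\<lambda>j. sg S j * ?w j + v j) = aff n {} (\<lambda>j. sg S j * v j + ?w j)"
      by (simp add: mulG)
    then have "sg S k * ?w k + v k = sg S k * v k + ?w k" using kn unfolding aff_eq by blast
    then show False using k by (simp add: sg_def unitv_def)
  qed
next
  assume S0: "S = {}"
  show "isT K (aff n S v)"
    unfolding isT_def
  proof (intro conjI ballI)
    show "aff n S v \<in> carrier K" using g .
    fix h assume h: "h \<in> carrier K"
    then obtain S' u where hu: "h = aff n S' u" using carrier_form by blast
    have ih: "inv\<^bsub>K\<^esub> (aff n S' u) = aff n S' (\<lambda>k. - sg S' k * u k)" using invG h hu by blast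
    show "aff n S v \<otimes>\<^bsub>K\<^esub> (h \<otimes>\<^bsub>K\<^esub> aff n S v \<otimes>\<^bsub>K\<^esub> inv\<^bsub>K\<^esub> h) =
          h \<otimes>\<^bsub>K\<^esub> aff n S v \<otimes>\<^bsub>K\<^esub> inv\<^bsub>K\<^esub> h \<otimes>\<^bsub>K\<^esub> aff n S v"
      unfolding hu S0 ih by (simp add: mulG algebra_simps)
  qed
qed

lemma isT_form:
  assumes "isT K t"
  shows "\<exists>m. t = aff n {} m \<and> (\<forall>k\<in>{1..n}. m k \<in> \<int>)"
proof -
  have tc: "t \<in> carrier K" using assms unfolding isT_def by blast
  obtain S m where t: "t = aff n S m" "inM n c S m" using carrier_form[OF tc] by blast
  have S: "S \<subseteq> {1..n}" using t(2) unfolding inM_def by (auto simp: subset_iff)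
  have "S = {}" using isT_iff[of S m] assms tc t S by simp
  then show ?thesis using t unfolding inM_def sig_def by auto
qed

lemma invs_iff:
  "invs K (aff n S v) (aff n {} m) \<longleftrightarrow> (\<forall>k\<in>{1..n}. k \<notin> S \<longrightarrow> m k = 0)"
proof -
  have "invs K (aff n S v) (aff n {} m) \<longleftrightarrow>
        aff n S (\<lambda>k. sg S k * m k + (v k + m k)) = aff n S v"
    unfolding invs_def by (simp add: mulG)
  also have "\<dots> \<longleftrightarrow> (\<forall>k\<in>{1..n}. sg S k * m k + (v k + m k) = v k)"
    unfolding aff_eq by simp
  also have "\<dots> \<longleftrightarrow> (\<forall>k\<in>{1..n}. k \<notin> S \<longrightarrow> m k = 0)"
    by (auto simp: sg_def)
  finally show ?thesis .
qed

lemma sub_iff: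
  assumes d: "aff n Sd u \<in> carrier K"
  shows "(\<forall>t\<in>carrier K. isT K t \<and> invs K (aff n Sd u) t \<longrightarrow> invs K (aff n S v) t) \<longleftrightarrow>
         (Sd \<inter> {1..n} \<subseteq> S)"
proof
  assume A: "\<forall>t\<in>carrier K. isT K t \<and> invs K (aff n Sd u) t \<longrightarrow> invs K (aff n S v) t"
  show "Sd \<inter> {1..n} \<subseteq> S"
  proof
    fix k assume k: "k \<in> Sd \<inter> {1..n}"
    then have kn: "k \<in> {1..n}" by auto
    have tc: "aff n {} (unitv k) \<in> carrier K" using transl_in[OF kn] .
    have tT: "isT K (aff n {} (unitv k))" using isT_iff[OF tc] by simp
    have "invs K (aff n Sd u) (aff n {} (unitv k))" unfolding invs_iff using k
      by (auto simp: unitv_def)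
    then have "invs K (aff n S v) (aff n {} (unitv k))" using A tc tT by blast
    then show "k \<in> S" unfolding invs_iff using kn by (auto simp: unitv_def)
  qed
next
  assume sub: "Sd \<inter> {1..n} \<subseteq> S"
  show "\<forall>t\<in>carrier K. isT K t \<and> invs K (aff n Sd u) t \<longrightarrow> invs K (aff n S v) t"
  proof (intro ballI impI)
    fix t assume t: "t \<in> carrier K" "isT K t \<and> invs K (aff n Sd u) t"
    then obtain m where m: "t = aff n {} m" using isT_form by blast
    show "invs K (aff n S v) t" using t(2) sub unfolding m invs_iff by blast
  qed
qed

lemma atom_iff:
  assumes g: "aff n S v \<in> carrier K" and S: "S \<subseteq> {1..n}"
  shows "atom K (aff n S v) \<longleftrightarrow> (\<exists>i. S = {i})"
proof -
  have inM: "inM n c S v" using carrier_aff[OF g S] .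
  then have S1: "S \<subseteq> {1..n-1}" unfolding inM_def by simp
  have dform: "\<And>d. d \<in> carrier K \<Longrightarrow> \<exists>Sd u. d = aff n Sd u \<and> Sd \<subseteq> {1..n-1}"
    using carrier_form unfolding inM_def by blast
  have key: "(\<forall>d\<in>carrier K. \<not> isT K d \<and> (\<forall>t\<in>carrier K. isT K t \<and> invs K d t \<longrightarrow> invs K (aff n S v) t)
        \<longrightarrow> (\<forall>t\<in>carrier K. isT K t \<and> invs K (aff n S v) t \<longrightarrow> invs K d t)) \<longleftrightarrow>
        (\<forall>Sd u. aff n Sd u \<in> carrier K \<and> Sd \<subseteq> {1..n-1} \<longrightarrow> Sd \<noteq> {} \<and> Sd \<subseteq> S \<longrightarrow> S \<subseteq> Sd)"
  proof -
    have e: "(\<not> isT K (aff n Sd u) \<and> (\<forall>t\<in>carrier K. isT K t \<and> invs K (aff n Sd u) t \<longrightarrow> invs K (aff n S v) t)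
        \<longrightarrow> (\<forall>t\<in>carrier K. isT K t \<and> invs K (aff n S v) t \<longrightarrow> invs K (aff n Sd u) t))
        \<longleftrightarrow> (Sd \<noteq> {} \<and> Sd \<subseteq> S \<longrightarrow> S \<subseteq> Sd)"
      if "aff n Sd u \<in> carrier K" "Sd \<subseteq> {1..n-1}" for Sd u
    proof -
      have "{1..n-1} \<subseteq> {1..n}" by auto
      then have "Sd \<subseteq> {1..n}" using that(2) by blast
      then have "Sd \<subseteq> {1..n}" "Sd \<inter> {1..n} = Sd" "S \<inter> {1..n} = S" using S by blast+
      note eqs = isT_iff[OF that(1) \<open>Sd \<subseteq> {1..n}\<close>] sub_iff[OF that(1), of S v] sub_iff[OF g, of Sd u]
      show ?thesis unfolding eqs \<open>Sd \<inter> {1..n} = Sd\<close> \<open>S \<inter> {1..n} = S\<close> by blast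
    qed
    show ?thesis
    proof
      assume L: "\<forall>d\<in>carrier K. \<not> isT K d \<and> (\<forall>t\<in>carrier K. isT K t \<and> invs K d t \<longrightarrow> invs K (aff n S v) t)
        \<longrightarrow> (\<forall>t\<in>carrier K. isT K t \<and> invs K (aff n S v) t \<longrightarrow> invs K d t)"
      show "\<forall>Sd u. aff n Sd u \<in> carrier K \<and> Sd \<subseteq> {1..n-1} \<longrightarrow> Sd \<noteq> {} \<and> Sd \<subseteq> S \<longrightarrow> S \<subseteq> Sd"
      proof (intro allI impI)
        fix Sd u assume a: "aff n Sd u \<in> carrier K \<and> Sd \<subseteq> {1..n-1}" "Sd \<noteq> {} \<and> Sd \<subseteq> S"
        then show "S \<subseteq> Sd" using e[of Sd u] L by blast
      qed
    next
      assume R: "\<forall>Sd u. aff n Sd u \<in> carrier K \<and> Sd \<subseteq> {1..n-1} \<longrightarrow> Sd \<noteq> {} \<and> Sd \<subseteq> S \<longrightarrow> S \<subseteq> Sd"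
      show "\<forall>d\<in>carrier K. \<not> isT K d \<and> (\<forall>t\<in>carrier K. isT K t \<and> invs K d t \<longrightarrow> invs K (aff n S v) t)
        \<longrightarrow> (\<forall>t\<in>carrier K. isT K t \<and> invs K (aff n S v) t \<longrightarrow> invs K d t)"
      proof (intro ballI)
        fix d assume d: "d \<in> carrier K"
        then obtain Sd u where du: "d = aff n Sd u" "Sd \<subseteq> {1..n-1}" using dform by blast
        show "\<not> isT K d \<and> (\<forall>t\<in>carrier K. isT K t \<and> invs K d t \<longrightarrow> invs K (aff n S v) t)
          \<longrightarrow> (\<forall>t\<in>carrier K. isT K t \<and> invs K (aff n S v) t \<longrightarrow> invs K d t)"
          using e[of Sd u] R d du by blast
      qed
    qed
  qed
  show ?thesis
  proof
    assume "atom K (aff n S v)"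
    then have a1: "\<not> isT K (aff n S v)" and a2: "\<forall>d\<in>carrier K. \<not> isT K d \<and> (\<forall>t\<in>carrier K. isT K t \<and> invs K d t \<longrightarrow> invs K (aff n S v) t)
        \<longrightarrow> (\<forall>t\<in>carrier K. isT K t \<and> invs K (aff n S v) t \<longrightarrow> invs K d t)"
      unfolding atom_def by blast+
    have nT: "S \<noteq> {}" using a1 isT_iff[OF g S] by blast
    have K: "\<forall>Sd u. aff n Sd u \<in> carrier K \<and> Sd \<subseteq> {1..n-1} \<longrightarrow> Sd \<noteq> {} \<and> Sd \<subseteq> S \<longrightarrow> S \<subseteq> Sd"
      using a2 key by blast
    obtain i where i: "i \<in> S" using nT by blast
    then have i1: "i \<in> {1..n-1}" using S1 by auto
    have "{i} \<subseteq> {1..n-1}" "{i} \<noteq> {}" "{i} \<subseteq> S" using i i1 by auto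
    then have "S \<subseteq> {i}" using K genC_in[OF i1] by blast
    then show "\<exists>i. S = {i}" using i by blast
  next
    assume "\<exists>i. S = {i}"
    then obtain i where i: "S = {i}" by blast
    have "\<forall>Sd u. aff n Sd u \<in> carrier K \<and> Sd \<subseteq> {1..n-1} \<longrightarrow> Sd \<noteq> {} \<and> Sd \<subseteq> S \<longrightarrow> S \<subseteq> Sd"
      using i by blast
    moreover have "\<not> isT K (aff n S v)" using isT_iff[OF g S] i by blast
    ultimately show "atom K (aff n S v)" using key g unfolding atom_def by blast
  qed
qed


lemma comm_iff:
  assumes j: "j \<in> {1..n}"
  shows "aff n {} q \<otimes>\<^bsub>K\<^esub> aff n {j} u = aff n {j} u \<otimes>\<^bsub>K\<^esub> aff n {} q \<longleftrightarrow> q j = 0"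
proof -
  have "aff n {} q \<otimes>\<^bsub>K\<^esub> aff n {j} u = aff n {j} u \<otimes>\<^bsub>K\<^esub> aff n {} q \<longleftrightarrow>
        aff n {j} (\<lambda>k. u k + q k) = aff n {j} (\<lambda>k. sg {j} k * q k + u k)"
    by (simp add: mulG)
  also have "\<dots> \<longleftrightarrow> (\<forall>k\<in>{1..n}. u k + q k = sg {j} k * q k + u k)" unfolding aff_eq by simp
  also have "\<dots> \<longleftrightarrow> q j = 0" using j by (auto simp: sg_def)
  finally show ?thesis .
qed

lemma wtt: "aff n {} m \<otimes>\<^bsub>K\<^esub> aff n {} p \<otimes>\<^bsub>K\<^esub> aff n {} p = aff n {} (\<lambda>k. p k + (p k + m k))"
  by (simp add: mulG)

lemma ttrans:
  assumes j: "j \<in> {1..n}"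
  shows "aff n {} (\<lambda>k. of_int z * unitv j k) \<in> carrier K \<and> isT K (aff n {} (\<lambda>k. of_int z * unitv j k))"
  using mult_in[OF j] isT_iff[OF mult_in[OF j]] by simp

lemma evenAt_iff:
  assumes j: "j \<in> {1..n}"
  shows "evenAt K (aff n {} m) (aff n {j} u) \<longleftrightarrow> (\<exists>z::int. m j = 2 * of_int z)"
proof
  assume "evenAt K (aff n {} m) (aff n {j} u)"
  then obtain t where t: "t \<in> carrier K" "isT K t"
    "(aff n {} m \<otimes>\<^bsub>K\<^esub> t \<otimes>\<^bsub>K\<^esub> t) \<otimes>\<^bsub>K\<^esub> aff n {j} u = aff n {j} u \<otimes>\<^bsub>K\<^esub> (aff n {} m \<otimes>\<^bsub>K\<^esub> t \<otimes>\<^bsub>K\<^esub> t)"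
    unfolding evenAt_def by blast
  obtain p where p: "t = aff n {} p" "\<forall>k\<in>{1..n}. p k \<in> \<int>" using isT_form[OF t(2)] by blast
  have "p j + (p j + m j) = 0" using t(3) unfolding p(1) wtt comm_iff[OF j] .
  moreover obtain z0 where "p j = of_int z0" using p(2) j Ints_cases by metis
  ultimately have "m j = 2 * of_int (- z0)" by simp
  then show "\<exists>z::int. m j = 2 * of_int z" by blast
next
  assume "\<exists>z::int. m j = 2 * of_int z"
  then obtain z where z: "m j = 2 * of_int z" by blast
  let ?t = "aff n {} (\<lambda>k. of_int (- z) * unitv j k)"
  have "(\<lambda>k. of_int (- z) * unitv j k) j + ((\<lambda>k. of_int (- z) * unitv j k) j + m j) = 0"
    using z by (simp add: unitv_def)
  then have "(aff n {} m \<otimes>\<^bsub>K\<^esub> ?t \<otimes>\<^bsub>K\<^esub> ?t) \<otimes>\<^bsub>K\<^esub> aff n {j} u = aff n {j} u \<otimes>\<^bsub>K\<^esub> (aff n {} m \<otimes>\<^bsub>K\<^esub> ?t \<otimes>\<^bsub>K\<^esub> ?t)"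
    unfolding wtt comm_iff[OF j] .
  then show "evenAt K (aff n {} m) (aff n {j} u)" unfolding evenAt_def using ttrans[OF j, of "-z"] by blast
qed

lemma evenN_iff:
  "evenN K (aff n {} m) \<longleftrightarrow> (\<exists>z::int. m n = 2 * of_int z)"
proof -
  have nn: "n \<in> {1..n}" using n2 by auto
  show ?thesis
  proof
    assume "evenN K (aff n {} m)"
    then obtain t e where t: "t \<in> carrier K" "isT K t" "e \<in> carrier K"
      "invs K e (aff n {} m \<otimes>\<^bsub>K\<^esub> t \<otimes>\<^bsub>K\<^esub> t)"
      unfolding evenN_def by blast
    obtain p where p: "t = aff n {} p" "\<forall>k\<in>{1..n}. p k \<in> \<int>" using isT_form[OF t(2)] by blast
    obtain S u where e: "e = aff n S u" "inM n c S u" using carrier_form[OF t(3)] by blast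
    have "n \<notin> S" using e(2) n2 unfolding inM_def by auto
    then have "p n + (p n + m n) = 0" using t(4) nn unfolding p(1) e(1) wtt invs_iff by blast
    moreover obtain z0 where "p n = of_int z0" using p(2) nn Ints_cases by metis
    ultimately have "m n = 2 * of_int (- z0)" by simp
    then show "\<exists>z::int. m n = 2 * of_int z" by blast
  next
    assume "\<exists>z::int. m n = 2 * of_int z"
    then obtain z where z: "m n = 2 * of_int z" by blast
    let ?t = "aff n {} (\<lambda>k. of_int (- z) * unitv n k)"
    obtain v where v: "aff n {1..n-1} v \<in> carrier K" using class_exists[of "{1..n-1}"] by blast
    have "\<forall>k\<in>{1..n}. k \<notin> {1..n-1} \<longrightarrow>
        (\<lambda>k. of_int (- z) * unitv n k) k + ((\<lambda>k. of_int (- z) * unitv n k) k + m k) = 0"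
      using z by (auto simp: unitv_def)
    then have "invs K (aff n {1..n-1} v) (aff n {} m \<otimes>\<^bsub>K\<^esub> ?t \<otimes>\<^bsub>K\<^esub> ?t)"
      unfolding wtt invs_iff .
    then show "evenN K (aff n {} m)" unfolding evenN_def using ttrans[OF nn, of "-z"] v by blast
  qed
qed

lemma sq_form: "aff n {p} u \<otimes>\<^bsub>K\<^esub> aff n {p} u = aff n {} (\<lambda>k. sg {p} k * u k + u k)"
  by (simp add: mulG)

lemma sq_parity:
  assumes u: "inM n c {p} u" and k: "k \<in> {1..n}"
  shows "(\<exists>z::int. sg {p} k * u k + u k = 2 * of_int z) \<longleftrightarrow> cvec c p k = 0"
proof -
  have p: "p \<in> {1..n-1}" using u unfolding inM_def by auto
  have "u k - cvec c p k \<in> \<int>" using u k unfolding inM_def sig_def by auto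
  then obtain r where r: "u k - cvec c p k = of_int r" using Ints_cases by metis
  show ?thesis
  proof (cases "k = p")
    case True then show ?thesis by (auto simp: sg_def intro: exI[of _ 0])
  next
    case False
    then have sgk: "sg {p} k * u k + u k = 2 * of_int r + 2 * cvec c p k" using r by (simp add: sg_def)
    have "cvec c p k = 0 \<or> cvec c p k = 1/2" using cvec_vals[OF vp] p by auto
    then show ?thesis
    proof
      assume "cvec c p k = 0" then show ?thesis using sgk by auto
    next
      assume h: "cvec c p k = 1/2"
      have "\<not> (\<exists>z::int. sg {p} k * u k + u k = 2 * of_int z)"
      proof
        assume "\<exists>z::int. sg {p} k * u k + u k = 2 * of_int z"
        then obtain z where "2 * of_int r + 1 = (2 * of_int z :: real)" using sgk h by auto
        then have "2 * r + 1 = 2 * z" by linarith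
        then show False by presburger
      qed
      then show ?thesis using h by simp
    qed
  qed
qed

end


lemma iso_agree:
  assumes n2: "n \<ge> 2" and vc: "valid_params n c" and vc': "valid_params n c'"
    and iso: "Kgroup n c \<cong> Kgroup n c'"
  shows "AGREE n c c'"
proof -
  interpret A: KG n c using n2 vc by unfold_locales
  interpret B: KG n c' using n2 vc' by unfold_locales
  obtain \<phi> where phi: "\<phi> \<in> iso (Kgroup n c) (Kgroup n c')" using iso unfolding is_iso_def by blast
  interpret I: isoGH "Kgroup n c" "Kgroup n c'" \<phi> by (rule isoGH.intro[OF A.grpG B.grpG phi])
  define \<gamma> where "\<gamma> i = aff n {i} (cvec c i)" for i
  have gin: "\<gamma> i \<in> carrier (Kgroup n c)" if "i \<in> {1..n-1}" for i
    using A.genC_in[OF that] unfolding \<gamma>_def .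
  have ex: "\<exists>pu. \<phi> (\<gamma> i) = aff n {fst pu} (snd pu) \<and> inM n c' {fst pu} (snd pu)" if i: "i \<in> {1..n-1}" for i
  proof -
    have "{i} \<subseteq> {1..n}" using i by auto
    then have "atom (Kgroup n c) (\<gamma> i)" using A.atom_iff[OF A.genC_in[OF i]] unfolding \<gamma>_def by blast
    then have at: "atom (Kgroup n c') (\<phi> (\<gamma> i))" using I.atom_tr gin[OF i] by blast
    have pc: "\<phi> (\<gamma> i) \<in> carrier (Kgroup n c')" using gin[OF i] by simp
    obtain S u where Su: "\<phi> (\<gamma> i) = aff n S u" "inM n c' S u" using B.carrier_form[OF pc] by blast
    have S: "S \<subseteq> {1..n}" using Su(2) unfolding inM_def by (auto simp: subset_iff)
    obtain p where "S = {p}" using B.atom_iff[OF pc[unfolded Su(1)] S] at Su(1) by auto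
    then show ?thesis using Su by (intro exI[of _ "(p, u)"]) simp
  qed
  then have "\<forall>i\<in>{1..n-1}. \<exists>pu. \<phi> (\<gamma> i) = aff n {fst pu} (snd pu) \<and> inM n c' {fst pu} (snd pu)"
    by blast
  from bchoice[OF this] obtain g where
    g: "\<forall>i\<in>{1..n-1}. \<phi> (\<gamma> i) = aff n {fst (g i)} (snd (g i)) \<and> inM n c' {fst (g i)} (snd (g i))"
    by blast
  define \<pi> where "\<pi> i = fst (g i)" for i
  define U where "U i = snd (g i)" for i
  have phig: "\<phi> (\<gamma> i) = aff n {\<pi> i} (U i)" and inMU: "inM n c' {\<pi> i} (U i)" if "i \<in> {1..n-1}" for i
    using g that unfolding \<pi>_def U_def by auto
  have pirange: "\<pi> i \<in> {1..n-1}" if "i \<in> {1..n-1}" for i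
    using inMU[OF that] unfolding inM_def by auto
  have piinj: "i = j" if i: "i \<in> {1..n-1}" and j: "j \<in> {1..n-1}" and eq: "\<pi> i = \<pi> j" for i j
  proof -
    have ci: "\<gamma> i \<otimes>\<^bsub>Kgroup n c\<^esub> inv\<^bsub>Kgroup n c\<^esub> \<gamma> j \<in> carrier (Kgroup n c)"
      using gin[OF i] gin[OF j] by simp
    have "\<phi> (\<gamma> i \<otimes>\<^bsub>Kgroup n c\<^esub> inv\<^bsub>Kgroup n c\<^esub> \<gamma> j)
        = \<phi> (\<gamma> i) \<otimes>\<^bsub>Kgroup n c'\<^esub> inv\<^bsub>Kgroup n c'\<^esub> \<phi> (\<gamma> j)"
      using gin[OF i] gin[OF j] by simp
    also have "\<dots> = aff n {\<pi> i} (U i) \<otimes>\<^bsub>Kgroup n c'\<^esub> aff n {\<pi> i} (\<lambda>k. - sg {\<pi> i} k * U j k)"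
    proof -
      have cj: "aff n {\<pi> j} (U j) \<in> carrier (Kgroup n c')" using I.f_car[OF gin[OF j]] phig[OF j] by simp
      have "inv\<^bsub>Kgroup n c'\<^esub> \<phi> (\<gamma> j) = aff n {\<pi> j} (\<lambda>k. - sg {\<pi> j} k * U j k)"
        using B.invG[OF cj] phig[OF j] by simp
      then show ?thesis using phig[OF i] eq by simp
    qed
    also have "\<dots> = aff n {} (\<lambda>k. sg {\<pi> i} k * (- sg {\<pi> i} k * U j k) + U i k)"
      by (simp add: B.mulG)
    finally have e: "\<phi> (\<gamma> i \<otimes>\<^bsub>Kgroup n c\<^esub> inv\<^bsub>Kgroup n c\<^esub> \<gamma> j) = aff n {} (\<lambda>k. sg {\<pi> i} k * (- sg {\<pi> i} k * U j k) + U i k)" .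
    have "isT (Kgroup n c') (aff n {} (\<lambda>k. sg {\<pi> i} k * (- sg {\<pi> i} k * U j k) + U i k))"
      using B.isT_iff[of "{}"] I.f_car[OF ci] e by simp
    then have T: "isT (Kgroup n c) (\<gamma> i \<otimes>\<^bsub>Kgroup n c\<^esub> inv\<^bsub>Kgroup n c\<^esub> \<gamma> j)"
      using I.isT_tr[OF ci] e by simp
    have eqn: "\<gamma> i \<otimes>\<^bsub>Kgroup n c\<^esub> inv\<^bsub>Kgroup n c\<^esub> \<gamma> j = aff n (sd {i} {j}) (\<lambda>k. sg {i} k * (- sg {j} k * cvec c j k) + cvec c i k)"
    proof -
      have "inv\<^bsub>Kgroup n c\<^esub> (aff n {j} (cvec c j)) = aff n {j} (\<lambda>k. - sg {j} k * cvec c j k)"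
        by (rule A.invG[OF A.genC_in[OF j]])
      then show ?thesis unfolding \<gamma>_def by (simp only: A.mulG)
    qed
    have sub: "sd {i} {j} \<subseteq> {1..n}" using i j unfolding sd_def by auto
    have ci': "aff n (sd {i} {j}) (\<lambda>k. sg {i} k * (- sg {j} k * cvec c j k) + cvec c i k) \<in> carrier (Kgroup n c)"
      using ci unfolding eqn .
    have sdE: "sd {i} {j} = {}" using A.isT_iff[OF ci' sub] T[unfolded eqn] by blast
    show "i = j"
    proof (rule ccontr)
      assume "i \<noteq> j"
      then have "i \<in> sd {i} {j}" unfolding sd_def by simp
      then show False using sdE by simp
    qed
  qed
  define f where "f k = (if k = n then n else \<pi> k)" for k
  have frange: "f ` {1..n} \<subseteq> {1..n}"
  proof
    fix y assume "y \<in> f ` {1..n}"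
    then obtain k where k: "k \<in> {1..n}" "y = f k" by blast
    show "y \<in> {1..n}"
    proof (cases "k = n")
      case True then show ?thesis using k n2 unfolding f_def by auto
    next
      case False then have "k \<in> {1..n-1}" using k by auto
      then show ?thesis using pirange k False unfolding f_def by fastforce
    qed
  qed
  have finj: "inj_on f {1..n}"
  proof (rule inj_onI)
    fix x y assume x: "x \<in> {1..n}" and y: "y \<in> {1..n}" and e: "f x = f y"
    show "x = y"
    proof (cases "x = n"; cases "y = n")
      assume "x = n" "y \<noteq> n"
      then have "y \<in> {1..n-1}" using y by auto
      then show ?thesis using e pirange \<open>x = n\<close> \<open>y \<noteq> n\<close> unfolding f_def by fastforce
    next
      assume "x \<noteq> n" "y = n"
      then have "x \<in> {1..n-1}" using x by auto
      then show ?thesis using e pirange \<open>x \<noteq> n\<close> \<open>y = n\<close> unfolding f_def by fastforce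
    next
      assume "x \<noteq> n" "y \<noteq> n"
      then have "x \<in> {1..n-1}" "y \<in> {1..n-1}" using x y by auto
      then show ?thesis using e piinj \<open>x \<noteq> n\<close> \<open>y \<noteq> n\<close> unfolding f_def by auto
    qed simp
  qed
  have fbij: "bij_betw f {1..n} {1..n}"
    using endo_inj_surj[OF _ frange finj] finj unfolding bij_betw_def by simp
  have fn: "f n = n" unfolding f_def by simp
  have rel: "\<forall>k\<in>{1..n}. \<forall>i\<in>{1..n-1}. (cvec c i k = 1/2 \<longleftrightarrow> cvec c' (f i) (f k) = 1/2)"
  proof (intro ballI)
    fix k i assume k: "k \<in> {1..n}" and i: "i \<in> {1..n-1}"
    have fi: "f i = \<pi> i" using i unfolding f_def by auto
    have inMg: "inM n c {i} (cvec c i)" using A.inM_genC[OF i] .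
    let ?w = "\<gamma> i \<otimes>\<^bsub>Kgroup n c\<^esub> \<gamma> i"
    have wc: "?w \<in> carrier (Kgroup n c)" using gin[OF i] by simp
    have w: "?w = aff n {} (\<lambda>k. sg {i} k * cvec c i k + cvec c i k)"
      unfolding \<gamma>_def by (rule A.sq_form)
    have pw: "\<phi> ?w = aff n {} (\<lambda>k. sg {\<pi> i} k * U i k + U i k)"
    proof -
      have "\<phi> ?w = \<phi> (\<gamma> i) \<otimes>\<^bsub>Kgroup n c'\<^esub> \<phi> (\<gamma> i)" using I.fold_mult[OF gin[OF i] gin[OF i]] by simp
      then show ?thesis unfolding phig[OF i] B.sq_form .
    qed
    have eq0: "cvec c i k = 0 \<longleftrightarrow> cvec c' (\<pi> i) (f k) = 0"
    proof (cases "k = n")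
      case True
      have "evenN (Kgroup n c') (\<phi> ?w) \<longleftrightarrow> evenN (Kgroup n c) ?w" using I.evenN_tr[OF wc] .
      then have "(\<exists>z::int. sg {\<pi> i} n * U i n + U i n = 2 * of_int z) \<longleftrightarrow>
                 (\<exists>z::int. sg {i} n * cvec c i n + cvec c i n = 2 * of_int z)"
        unfolding pw unfolding w A.evenN_iff B.evenN_iff by simp
      then show ?thesis using A.sq_parity[OF inMg k] B.sq_parity[OF inMU[OF i] k] True fn by simp
    next
      case False
      then have k1: "k \<in> {1..n-1}" using k by auto
      have fk: "f k = \<pi> k" using False unfolding f_def by simp
      have pk: "\<pi> k \<in> {1..n}" using pirange[OF k1] by auto
      have "evenAt (Kgroup n c') (\<phi> ?w) (\<phi> (\<gamma> k)) \<longleftrightarrow> evenAt (Kgroup n c) ?w (\<gamma> k)"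
        using I.evenAt_tr[OF wc gin[OF k1]] .
      then have "(\<exists>z::int. sg {\<pi> i} (\<pi> k) * U i (\<pi> k) + U i (\<pi> k) = 2 * of_int z) \<longleftrightarrow>
                 (\<exists>z::int. sg {i} k * cvec c i k + cvec c i k = 2 * of_int z)"
        unfolding pw phig[OF k1] unfolding w unfolding \<gamma>_def A.evenAt_iff[OF k] B.evenAt_iff[OF pk] by simp
      then show ?thesis using A.sq_parity[OF inMg k] B.sq_parity[OF inMU[OF i] pk] fk by simp
    qed
    have v1: "cvec c i k = 0 \<or> cvec c i k = 1/2" using cvec_vals[OF vc] i by auto
    have v2: "cvec c' (\<pi> i) (f k) = 0 \<or> cvec c' (\<pi> i) (f k) = 1/2" using cvec_vals[OF vc'] pirange[OF i] by auto
    show "cvec c i k = 1/2 \<longleftrightarrow> cvec c' (f i) (f k) = 1/2" using eq0 v1 v2 fi by auto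
  qed
  show ?thesis using rel_to_agree[OF vc vc' n2 fbij fn rel] .
qed


lemma cvec_out:
  assumes "i \<le> n - 1" "k \<notin> {1..n}" "1 \<le> i"
  shows "cvec c i k = 0"
proof -
  have "k \<noteq> i + 1" using assms by auto
  moreover have "\<not> (1 \<le> k \<and> k < i)" using assms by auto
  ultimately show ?thesis unfolding cvec_closed by presburger
qed

lemma agree_eq:
  assumes "n \<ge> 2" "AGREE n c c'"
  shows "Kgroup n c = Kgroup n c'"
proof -
  have cv: "cvec c i = cvec c' i" if i: "i \<in> {1..n-1}" for i
  proof (rule ext)
    fix k show "cvec c i k = cvec c' i k"
    proof (cases "k \<in> {1..n}")
      case True then show ?thesis using assms(2) i unfolding AGREE_def by blast
    next
      case False
      have "i \<le> n - 1" "1 \<le> i" using i by simp_all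
      then show ?thesis using cvec_out[OF _ False] by metis
    qed
  qed
  have geq: "\<forall>i. 1 \<le> i \<and> i \<le> n - 1 \<longrightarrow> genC n c i = genC n c' i"
  proof (intro allI impI)
    fix i assume "1 \<le> i \<and> i \<le> n - 1"
    then have "cvec c i = cvec c' i" using cv by simp
    then show "genC n c i = genC n c' i" unfolding genC_def by simp
  qed
  have "{genC n c i |i. 1 \<le> i \<and> i \<le> n - 1} = {genC n c' i |i. 1 \<le> i \<and> i \<le> n - 1}"
  proof (rule Collect_cong)
    fix x show "(\<exists>i. x = genC n c i \<and> 1 \<le> i \<and> i \<le> n - 1) \<longleftrightarrow> (\<exists>i. x = genC n c' i \<and> 1 \<le> i \<and> i \<le> n - 1)"
      using geq by metis
  qed
  then show ?thesis unfolding Kgroup_def by simp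
qed

theorem proposition4p4:
  fixes n :: nat and c c' :: "nat \<Rightarrow> nat \<Rightarrow> real"
  assumes "n \<ge> 2" and "valid_params n c" and "valid_params n c'"
  shows "(Kgroup n c \<cong> Kgroup n c' \<longleftrightarrow> arr n c = arr n c')
       \<and> (arr n c = arr n c' \<longleftrightarrow> digraph_iso {1..n} (arcs n c) {1..n} (arcs n c'))"
proof
  show "Kgroup n c \<cong> Kgroup n c' \<longleftrightarrow> arr n c = arr n c'"
  proof
    assume "Kgroup n c \<cong> Kgroup n c'"
    then have "AGREE n c c'" using iso_agree[OF assms] by simp
    then show "arr n c = arr n c'" using arr_eq_iff[OF assms(1)] by simp
  next
    assume "arr n c = arr n c'"
    then have "AGREE n c c'" using arr_eq_iff[OF assms(1)] by simp
    then have "Kgroup n c = Kgroup n c'" using agree_eq[OF assms(1)] by simp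
    then show "Kgroup n c \<cong> Kgroup n c'" by simp
  qed
next
  show "arr n c = arr n c' \<longleftrightarrow> digraph_iso {1..n} (arcs n c) {1..n} (arcs n c')"
    by (rule digraph_part[OF assms(2,3,1)])
qed

end
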